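(* If $\tau$ is measurable and boundedly oscillating, then there exist $g\in C^\infty(\mathbb{R})$ vanishing on $(-\infty,0]$ with $g^{(n)}\in L^\infty(\mathbb{R})$ for all $n\in\mathbb{N}$, and $x_0$ such that $\tau(x)=\int_0^x g(y)\,\mathrm{d}y+O(1)$ for $x\in[x_0,\infty)$.
   Context: A function $\tau$ is boundedly oscillating if there is $\delta>0$ with $\limsup_{x\to\infty}\sup_{h\in[0,\delta]}|\tau(x+h)-\tau(x)|<\infty$. *)

theory Defs
  imports "HOL-Analysis.Analysis"
begin

definition boundedly_oscillating :: "(real \<Rightarrow> real) \<Rightarrow> bool" where
  "boundedly_oscillating \<tau> \<longleftrightarrow>
     (\<exists>\<delta>>0. Limsup at_top (\<lambda>x. SUP h\<in>{0..\<delta>}. ereal \<bar>\<tau> (x + h) - \<tau> x\<bar>) < \<infinity>)"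

definition smooth_real :: "(real \<Rightarrow> real) \<Rightarrow> bool" where
  "smooth_real g \<longleftrightarrow> (\<forall>n x. ((deriv ^^ n) g) differentiable (at x))"

definition Linfty_real :: "(real \<Rightarrow> real) \<Rightarrow> bool" where
  "Linfty_real f \<longleftrightarrow> f \<in> borel_measurable lebesgue \<and> (\<exists>C. AE x in lebesgue. \<bar>f x\<bar> \<le> C)"

end

theory Submission imports Defs begin

definition E :: "nat \<Rightarrow> real \<Rightarrow> real" where
  "E k x = (if x > 0 then (1/x)^k * exp (-(1/x)) else 0)"

lemma E_lim: "(E k \<longlongrightarrow> 0) (at_right 0)"
proof -
  have "((\<lambda>t::real. t^k / exp t) \<longlongrightarrow> 0) at_top" by (rule tendsto_power_div_exp_0)
  moreover have "\<forall>\<^sub>F t in at_top. t^k / exp t = E k (inverse t)"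
    using eventually_gt_at_top[of "0::real"]
    by eventually_elim (simp add: E_def exp_minus field_simps)
  ultimately have "((\<lambda>t. E k (inverse t)) \<longlongrightarrow> 0) at_top"
    by (rule Lim_transform_eventually)
  then show ?thesis by (simp add: filterlim_at_right_to_top)
qed

lemma E_deriv: "(E k has_real_derivative (- real k * E (Suc k) x + E (Suc (Suc k)) x)) (at x)"
proof (cases "x > 0")
  case True
  have "((\<lambda>y. (1/y)^k * exp (-(1/y))) has_real_derivative (- real k * E (Suc k) x + E (Suc (Suc k)) x)) (at x)"
    using True
    apply (auto intro!: derivative_eq_intros simp: E_def)
    apply (cases k) apply (auto simp: field_simps power2_eq_square)
    done
  then show ?thesis
    apply (rule has_field_derivative_transform_within_open[where S="{0<..}"])
    using True by (auto simp: E_def)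
next
  case False
  show ?thesis
  proof (cases "x < 0")
    case True
    have "((\<lambda>y. 0) has_real_derivative (- real k * E (Suc k) x + E (Suc (Suc k)) x)) (at x)"
      using True by (auto intro!: derivative_eq_intros simp: E_def)
    then show ?thesis
      apply (rule has_field_derivative_transform_within_open[where S="{..<0}"])
      using True by (auto simp: E_def)
  next
    case False
    with \<open>\<not> x > 0\<close> have x0: "x = 0" by auto
    have "((\<lambda>h. (E k (0 + h) - E k 0) / h) \<longlongrightarrow> 0) (at 0)"
    proof (rule filterlim_split_at)
      show "((\<lambda>h. (E k (0 + h) - E k 0) / h) \<longlongrightarrow> 0) (at_left 0)"
        apply (rule tendsto_eventually)
        unfolding eventually_at_left_field by (rule exI[of _ "-1"]) (simp add: E_def)
      have "\<forall>\<^sub>F h in at_right 0. E (Suc k) h = (E k (0 + h) - E k 0) / h"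
        unfolding eventually_at_right_field by (rule exI[of _ 1]) (simp add: E_def)
      then show "((\<lambda>h. (E k (0 + h) - E k 0) / h) \<longlongrightarrow> 0) (at_right 0)"
        by (rule Lim_transform_eventually[OF E_lim[of "Suc k"]])
    qed
    then show ?thesis using x0 by (simp add: DERIV_def E_def)
  qed
qed

inductive sm :: "(real \<Rightarrow> real) \<Rightarrow> bool" where
  smE: "sm (E k)"
| smC: "sm (\<lambda>x. c)"
| smAdd: "sm f \<Longrightarrow> sm g \<Longrightarrow> sm (\<lambda>x. f x + g x)"
| smMult: "sm f \<Longrightarrow> sm g \<Longrightarrow> sm (\<lambda>x. f x * g x)"
| smAff: "sm f \<Longrightarrow> sm (\<lambda>x. f (a * x + b))"
| smInv: "sm f \<Longrightarrow> (\<And>x. f x \<noteq> 0) \<Longrightarrow> sm (\<lambda>x. inverse (f x))"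

lemma sm_deriv: "sm f \<Longrightarrow> (\<forall>x. (f has_real_derivative deriv f x) (at x)) \<and> sm (deriv f)"
proof (induction rule: sm.induct)
  case (smE k)
  have d: "deriv (E k) = (\<lambda>x. - real k * E (Suc k) x + E (Suc (Suc k)) x)"
    using E_deriv DERIV_imp_deriv by blast
  have "sm (\<lambda>x. - real k * E (Suc k) x + E (Suc (Suc k)) x)"
    by (intro sm.intros)
  then show ?case using d E_deriv by simp
next
  case (smC c)
  have d: "deriv (\<lambda>x. c) = (\<lambda>x. 0)" by (rule ext) (rule DERIV_imp_deriv, rule DERIV_const)
  then show ?case by (auto intro: sm.intros)
next
  case (smAdd f g)
  have D: "((\<lambda>x. f x + g x) has_real_derivative (deriv f x + deriv g x)) (at x)" for x
    using smAdd by (auto intro: DERIV_add)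
  then have d: "deriv (\<lambda>x. f x + g x) = (\<lambda>x. deriv f x + deriv g x)"
    by (intro ext DERIV_imp_deriv)
  show ?case using D smAdd by (simp add: d sm.smAdd)
next
  case (smMult f g)
  have D: "((\<lambda>x. f x * g x) has_real_derivative (deriv f x * g x + f x * deriv g x)) (at x)" for x
    using smMult by (auto intro!: derivative_eq_intros)
  then have d: "deriv (\<lambda>x. f x * g x) = (\<lambda>x. deriv f x * g x + f x * deriv g x)"
    by (intro ext DERIV_imp_deriv)
  show ?case using D smMult by (simp add: d sm.smAdd sm.smMult)
next
  case (smAff f a b)
  have D: "((\<lambda>x. f (a * x + b)) has_real_derivative (deriv f (a * x + b) * a)) (at x)" for x
  proof -
    have "((\<lambda>x. a * x + b) has_real_derivative a) (at x)"
      by (auto intro!: derivative_eq_intros)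
    then show ?thesis
      using smAff DERIV_chain2[of f "deriv f (a * x + b)" "\<lambda>x. a * x + b" x a UNIV] by auto
  qed
  then have d: "deriv (\<lambda>x. f (a * x + b)) = (\<lambda>x. deriv f (a * x + b) * a)"
    by (intro ext DERIV_imp_deriv)
  show ?case using D smAff by (simp add: d sm.smAff sm.smMult sm.smC)
next
  case (smInv f)
  have D: "((\<lambda>x. inverse (f x)) has_real_derivative (- deriv f x * (inverse (f x) * inverse (f x)))) (at x)" for x
    using smInv by (auto intro!: derivative_eq_intros simp: power2_eq_square)
  then have d: "deriv (\<lambda>x. inverse (f x)) = (\<lambda>x. - deriv f x * (inverse (f x) * inverse (f x)))"
    by (intro ext DERIV_imp_deriv)
  have "sm (\<lambda>x. (-1) * deriv f x * (inverse (f x) * inverse (f x)))"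
    using smInv by (intro sm.intros) auto
  then show ?case using D by (simp add: d)
qed

lemma sm_iter: "sm f \<Longrightarrow> sm ((deriv ^^ n) f)"
  by (induction n) (auto dest: sm_deriv)

lemma sm_DERIV: "sm f \<Longrightarrow> (f has_real_derivative deriv f x) (at x)"
  using sm_deriv by blast

lemma sm_differentiable: "sm f \<Longrightarrow> f differentiable (at x)"
  using sm_DERIV real_differentiable_def by blast

lemma sm_cont: "sm f \<Longrightarrow> isCont f x"
  using sm_differentiable differentiable_imp_continuous_within by blast

lemma iter_Suc: "(deriv ^^ Suc n) f = deriv ((deriv ^^ n) f)"
  by simp

lemma iter_add: "sm f \<Longrightarrow> sm g \<Longrightarrow> (deriv^^n)(\<lambda>x. f x + g x) = (\<lambda>x. (deriv^^n) f x + (deriv^^n) g x)"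
proof (induction n)
  case 0 then show ?case by simp
next
  case (Suc n)
  have "deriv (\<lambda>x. (deriv^^n) f x + (deriv^^n) g x) = (\<lambda>x. (deriv^^Suc n) f x + (deriv^^Suc n) g x)"
    using sm_DERIV[OF sm_iter[OF Suc.prems(1), of n]] sm_DERIV[OF sm_iter[OF Suc.prems(2), of n]]
    by (intro ext DERIV_imp_deriv) (auto intro: DERIV_add)
  then show ?case using Suc by (simp only: iter_Suc)
qed

lemma iter_cmult: "sm f \<Longrightarrow> (deriv^^n)(\<lambda>x. c * f x) = (\<lambda>x. c * (deriv^^n) f x)"
proof (induction n)
  case 0 then show ?case by simp
next
  case (Suc n)
  have "deriv (\<lambda>x. c * (deriv^^n) f x) = (\<lambda>x. c * (deriv^^Suc n) f x)"
    using sm_DERIV[OF sm_iter[OF Suc.prems(1), of n]]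
    by (intro ext DERIV_imp_deriv) (auto intro: DERIV_cmult)
  then show ?case using Suc by (simp only: iter_Suc)
qed

lemma iter_shift: "sm f \<Longrightarrow> (deriv^^n)(\<lambda>x. f (x - b)) = (\<lambda>x. (deriv^^n) f (x - b))"
proof (induction n)
  case 0 then show ?case by simp
next
  case (Suc n)
  have "deriv (\<lambda>x. (deriv^^n) f (x - b)) = (\<lambda>x. (deriv^^Suc n) f (x - b))"
  proof (intro ext DERIV_imp_deriv)
    fix x
    have 1: "((deriv^^n) f has_real_derivative (deriv^^Suc n) f (x - b)) (at (x - b))"
      using sm_DERIV[OF sm_iter[OF Suc.prems(1), of n]] by simp
    have 2: "((\<lambda>x. x - b) has_real_derivative 1) (at x)"
      by (auto intro!: derivative_eq_intros)
    show "((\<lambda>x. (deriv^^n) f (x - b)) has_real_derivative (deriv^^Suc n) f (x - b)) (at x)"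
      using DERIV_chain2[OF 1 2] by simp
  qed
  then show ?case using Suc by (simp only: iter_Suc)
qed

lemma iter_zero: "(deriv^^n)(\<lambda>x. 0::real) = (\<lambda>x. 0)"
proof (induction n)
  case 0 then show ?case by simp
next
  case (Suc n)
  then show ?case by (simp only: iter_Suc) (intro ext DERIV_imp_deriv DERIV_const)
qed

lemma iter_const: "(deriv^^Suc n)(\<lambda>x. c::real) = (\<lambda>x. 0)"
proof -
  have "deriv (\<lambda>x. c::real) = (\<lambda>x. 0)" by (intro ext DERIV_imp_deriv DERIV_const)
  then show ?thesis by (simp only: funpow_Suc_right o_def iter_zero)
qed

lemma loc_eq: "open U \<Longrightarrow> (\<forall>y\<in>U. f y = h y) \<Longrightarrow> y \<in> U \<Longrightarrow> (deriv^^n) f y = (deriv^^n) h y"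
proof (induction n arbitrary: y)
  case 0 then show ?case by simp
next
  case (Suc n)
  have "\<forall>\<^sub>F z in nhds y. (deriv^^n) f z = (deriv^^n) h z"
    unfolding eventually_nhds using Suc by blast
  then show ?case by (simp only: iter_Suc) (erule deriv_cong_ev, rule refl)
qed

lemma loc_diff: "open U \<Longrightarrow> (\<forall>y\<in>U. f y = h y) \<Longrightarrow> y \<in> U \<Longrightarrow> sm h \<Longrightarrow> (deriv^^n) f differentiable (at y)"
proof -
  assume a: "open U" "\<forall>y\<in>U. f y = h y" "y \<in> U" "sm h"
  have "((deriv^^n) h has_real_derivative deriv ((deriv^^n) h) y) (at y)"
    using sm_DERIV[OF sm_iter[OF a(4)]] by blast
  then have "((deriv^^n) f has_real_derivative deriv ((deriv^^n) h) y) (at y)"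
    apply (rule has_field_derivative_transform_within_open[where S=U])
    using a loc_eq[of U f h] by auto
  then show ?thesis using real_differentiable_def by blast
qed

definition S :: "real \<Rightarrow> real" where
  "S t = E 0 t * inverse (E 0 t + E 0 (1 - t))"

lemma E0_pos: "t > 0 \<Longrightarrow> E 0 t > 0" by (simp add: E_def)

lemma sm_S: "sm S"
proof -
  have "sm (\<lambda>x. E 0 ((-1) * x + 1))" by (intro sm.intros)
  then have "sm (\<lambda>x. E 0 (1 - x))" by simp
  moreover have "E 0 x + E 0 (1 - x) \<noteq> 0" for x
  proof -
    have "E 0 x \<ge> 0" "E 0 (1 - x) \<ge> 0" by (auto simp: E_def)
    moreover have "E 0 x > 0 \<or> E 0 (1 - x) > 0" using E0_pos[of x] E0_pos[of "1-x"] by linarith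
    ultimately show ?thesis by linarith
  qed
  ultimately have "sm (\<lambda>x. E 0 x * inverse (E 0 x + E 0 (1 - x)))"
    by (intro sm.intros) auto
  then show ?thesis unfolding S_def[abs_def] .
qed

lemma S_le0: "t \<le> 0 \<Longrightarrow> S t = 0" by (simp add: S_def E_def)
lemma S_ge1: "t \<ge> 1 \<Longrightarrow> S t = 1" by (simp add: S_def E_def)

lemma S_iter_out: "t < 0 \<or> t > 1 \<Longrightarrow> \<bar>(deriv^^n) S t\<bar> \<le> 1"
proof -
  assume t: "t < 0 \<or> t > 1"
  show ?thesis
  proof (cases n)
    case 0 then show ?thesis using t by (auto simp: S_le0 S_ge1)
  next
    case (Suc m)
    show ?thesis
    proof (cases "t < 0")
      case True
      have "(deriv^^n) S t = (deriv^^n) (\<lambda>x. 0::real) t"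
        by (rule loc_eq[of "{..<0}"]) (use True in \<open>auto simp: S_le0\<close>)
      then show ?thesis by (simp add: iter_zero)
    next
      case False
      then have "t > 1" using t by auto
      have "(deriv^^n) S t = (deriv^^n) (\<lambda>x. 1::real) t"
        by (rule loc_eq[of "{1<..}"]) (use \<open>t > 1\<close> in \<open>auto simp: S_ge1\<close>)
      moreover have "(deriv^^n) (\<lambda>x. 1::real) t = 0" using Suc iter_const[of m "1::real"] by simp
      ultimately show ?thesis by simp
    qed
  qed
qed

lemma S_iter_bound: "\<exists>B. \<forall>t. \<bar>(deriv^^n) S t\<bar> \<le> B"
proof -
  have "continuous_on {0..1} ((deriv^^n) S)"
    using sm_cont[OF sm_iter[OF sm_S]] by (simp add: continuous_at_imp_continuous_on)
  then have "compact (((deriv^^n) S) ` {0..1})" by (rule compact_continuous_image) simp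
  then obtain B where B: "\<forall>y\<in>((deriv^^n) S) ` {0..1}. norm y \<le> B"
    using compact_imp_bounded bounded_iff by metis
  show ?thesis
  proof (intro exI[of _ "max B 1"] allI)
    fix t
    show "\<bar>(deriv^^n) S t\<bar> \<le> max B 1"
    proof (cases "t \<in> {0..1}")
      case True then show ?thesis using B by force
    next
      case False then show ?thesis using S_iter_out[of t n] by force
    qed
  qed
qed

lemma osc_unit:
  fixes \<tau> :: "real \<Rightarrow> real"
  assumes d: "\<delta> > 0" and r: "\<forall>x\<ge>x1. \<forall>h\<in>{0..\<delta>}. \<bar>\<tau> (x + h) - \<tau> x\<bar> \<le> r"
  shows "\<exists>M\<ge>0. \<forall>x\<ge>x1. \<forall>h\<in>{0..1}. \<bar>\<tau> (x + h) - \<tau> x\<bar> \<le> M"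
proof -
  have r0: "r \<ge> 0" using r[rule_format, of x1 0] d by auto
  have step: "\<forall>x\<ge>x1. \<forall>s\<in>{0..\<delta>}. \<bar>\<tau> (x + real m * s) - \<tau> x\<bar> \<le> real m * r" for m
  proof (induction m)
    case 0 then show ?case by simp
  next
    case (Suc m)
    show ?case
    proof (intro allI impI ballI)
      fix x s assume x: "x \<ge> x1" and s: "s \<in> {0..\<delta>}"
      have "real m * s \<ge> 0" using s by simp
      then have "x + real m * s \<ge> x1" using x by linarith
      then have 1: "\<bar>\<tau> (x + real m * s + s) - \<tau> (x + real m * s)\<bar> \<le> r" using r s by simp
      have 2: "\<bar>\<tau> (x + real m * s) - \<tau> x\<bar> \<le> real m * r" using Suc.IH x s by simp
      have "x + real (Suc m) * s = x + real m * s + s" by (simp add: algebra_simps)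
      then show "\<bar>\<tau> (x + real (Suc m) * s) - \<tau> x\<bar> \<le> real (Suc m) * r"
        using 1 2 by (simp add: algebra_simps)
    qed
  qed
  define N where "N = nat \<lceil>1/\<delta>\<rceil>"
  have N1: "real N \<ge> 1/\<delta>" unfolding N_def by linarith
  moreover have "1/\<delta> > 0" using d by simp
  ultimately have Npos: "real N > 0" by linarith
  show ?thesis
  proof (intro exI[of _ "real N * r"] conjI allI impI ballI)
    show "real N * r \<ge> 0" using r0 by simp
    fix x h assume x: "x \<ge> x1" and h: "h \<in> {0..1::real}"
    define s where "s = h / real N"
    have "s \<le> 1 / real N" using h Npos unfolding s_def by (simp add: divide_right_mono)
    also have "1 / real N \<le> \<delta>" using N1 d Npos by (simp add: field_simps)
    finally have "s \<in> {0..\<delta>}" using h Npos unfolding s_def by auto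
    moreover have "x + real N * s = x + h" using Npos unfolding s_def by simp
    ultimately show "\<bar>\<tau> (x + h) - \<tau> x\<bar> \<le> real N * r" using step[of N, rule_format, OF x, of s] by simp
  qed
qed

lemma osc_extract:
  fixes \<tau> :: "real \<Rightarrow> real"
  assumes "boundedly_oscillating \<tau>"
  shows "\<exists>x1. \<exists>M\<ge>0. \<forall>x\<ge>x1. \<forall>h\<in>{0..1}. \<bar>\<tau> (x + h) - \<tau> x\<bar> \<le> M"
proof -
  obtain \<delta> where d: "\<delta> > 0" and L: "Limsup at_top (\<lambda>x. SUP h\<in>{0..\<delta>}. ereal \<bar>\<tau> (x + h) - \<tau> x\<bar>) < \<infinity>"
    using assms unfolding boundedly_oscillating_def by blast
  obtain r where "Limsup at_top (\<lambda>x. SUP h\<in>{0..\<delta>}. ereal \<bar>\<tau> (x + h) - \<tau> x\<bar>) < ereal r"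
    using ereal_dense2[OF L] by blast
  then have "\<forall>\<^sub>F x in at_top. (SUP h\<in>{0..\<delta>}. ereal \<bar>\<tau> (x + h) - \<tau> x\<bar>) < ereal r"
    by (rule Limsup_lessD)
  then obtain x1 where x1: "\<forall>x\<ge>x1. (SUP h\<in>{0..\<delta>}. ereal \<bar>\<tau> (x + h) - \<tau> x\<bar>) < ereal r"
    unfolding eventually_at_top_linorder by (elim exE) (rule that)
  have "\<forall>x\<ge>x1. \<forall>h\<in>{0..\<delta>}. \<bar>\<tau> (x + h) - \<tau> x\<bar> \<le> r"
  proof (intro allI impI ballI)
    fix x h assume "x \<ge> x1" "h \<in> {0..\<delta>}"
    then have "ereal \<bar>\<tau> (x + h) - \<tau> x\<bar> < ereal r"
      using SUP_lessD[OF x1[rule_format, OF \<open>x \<ge> x1\<close>] \<open>h \<in> {0..\<delta>}\<close>] by simp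
    then show "\<bar>\<tau> (x + h) - \<tau> x\<bar> \<le> r" by simp
  qed
  then have "\<exists>M\<ge>0. \<forall>x\<ge>x1. \<forall>h\<in>{0..1}. \<bar>\<tau> (x + h) - \<tau> x\<bar> \<le> M"
    by (rule osc_unit[OF d])
  then show ?thesis by blast
qed

lemma sm_shift: "sm f \<Longrightarrow> sm (\<lambda>x. f (x - b))"
proof -
  assume "sm f"
  then have "sm (\<lambda>x. f (1 * x + (- b)))" by (rule smAff)
  then show ?thesis by simp
qed

lemma floor_cases:
  fixes y :: real and k :: int
  assumes "of_int k - 1 < y" "y < of_int k + 1"
  shows "(y < of_int k \<and> \<lfloor>y\<rfloor> = k - 1) \<or> (y \<ge> of_int k \<and> \<lfloor>y\<rfloor> = k)"
  using assms by (auto simp: floor_eq_iff)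

theorem proposition3p5:
  fixes \<tau> :: "real \<Rightarrow> real"
  assumes "\<tau> \<in> borel_measurable lebesgue"
    and "boundedly_oscillating \<tau>"
  shows "\<exists>g :: real \<Rightarrow> real. smooth_real g \<and> (\<forall>x\<le>0. g x = 0)
           \<and> (\<forall>n. Linfty_real ((deriv ^^ n) g))
           \<and> (\<exists>x0 C. \<forall>x\<ge>x0. \<bar>\<tau> x - integral {0..x} g\<bar> \<le> C)"
proof -
  obtain x1 M where M0: "M \<ge> 0" and M: "\<forall>x\<ge>x1. \<forall>h\<in>{0..1}. \<bar>\<tau> (x + h) - \<tau> x\<bar> \<le> M"
    using osc_extract[OF assms(2)] by blast
  define K :: int where "K = max 1 \<lceil>x1\<rceil>"
  define a :: "int \<Rightarrow> real" where "a k = (if k \<ge> K then \<tau> (of_int k + 1) - \<tau> (of_int k) else 0)" for k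
  define T :: "int \<Rightarrow> real" where "T k = (if k \<ge> K then \<tau> (of_int k) - \<tau> (of_int K) else 0)" for k
  define G :: "real \<Rightarrow> real" where "G x = T \<lfloor>x\<rfloor> + a \<lfloor>x\<rfloor> * S (x - of_int \<lfloor>x\<rfloor>)" for x
  define g where "g = deriv G"
  have K1: "K \<ge> 1" and Kx1: "of_int K \<ge> x1" unfolding K_def by (auto, linarith)
  have a_bound: "\<bar>a k\<bar> \<le> M" for k
  proof (cases "k \<ge> K")
    case True
    then have "of_int k \<ge> x1" using Kx1 by (smt (verit) of_int_le_iff)
    then show ?thesis using M True unfolding a_def by auto
  next
    case False then show ?thesis using M0 unfolding a_def by simp
  qed
  have Tstep: "T k = T (k - 1) + a (k - 1)" for k
    unfolding T_def a_def by auto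
  define hh where "hh k = (\<lambda>y. T (k - 1) + (a (k - 1) * S (y - of_int (k - 1)) + a k * S (y - of_int k)))" for k
  have sm_hh: "sm (hh k)" for k
    unfolding hh_def by (intro sm.intros sm_shift sm_S)
  have loc: "\<forall>y\<in>{of_int k - 1<..<of_int k + 1}. G y = hh k y" for k
  proof
    fix y assume "y \<in> {of_int k - 1<..<of_int k + 1::real}"
    then have "(y < of_int k \<and> \<lfloor>y\<rfloor> = k - 1) \<or> (y \<ge> of_int k \<and> \<lfloor>y\<rfloor> = k)"
      using floor_cases by auto
    then show "G y = hh k y"
    proof
      assume A: "y < of_int k \<and> \<lfloor>y\<rfloor> = k - 1"
      then have "S (y - of_int k) = 0" by (intro S_le0) simp
      then show ?thesis using A unfolding G_def hh_def by simp
    next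
      assume A: "of_int k \<le> y \<and> \<lfloor>y\<rfloor> = k"
      then have "S (y - of_int (k - 1)) = 1" by (intro S_ge1) simp
      then show ?thesis using A Tstep[of k] unfolding G_def hh_def by (simp add: algebra_simps)
    qed
  qed
  have opn: "open {of_int k - 1<..<of_int k + 1::real}" for k by simp
  have mem: "x \<in> {of_int \<lfloor>x\<rfloor> - 1<..<of_int \<lfloor>x\<rfloor> + 1::real}" for x by auto linarith+
  have gG: "(deriv^^n) g = (deriv^^Suc n) G" for n
    unfolding g_def by (simp only: funpow_Suc_right o_def)
  have smooth: "smooth_real g"
    unfolding smooth_real_def gG
    using loc_diff[OF opn loc mem sm_hh] by blast
  have G0: "\<forall>y\<in>{..<1}. G y = 0"
  proof
    fix y :: real assume "y \<in> {..<1}"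
    then have "\<lfloor>y\<rfloor> < K" using K1 by (simp add: floor_less_iff)
    then show "G y = 0" unfolding G_def T_def a_def by simp
  qed
  have gzero: "\<forall>x\<le>0. g x = 0"
  proof (intro allI impI)
    fix x :: real assume "x \<le> 0"
    then have "(deriv^^1) G x = (deriv^^1) (\<lambda>y. 0) x"
      by (intro loc_eq[OF _ G0]) auto
    then show "g x = 0" unfolding g_def by (simp add: iter_zero)
  qed
  have gn_formula: "(deriv^^n) g x = a (\<lfloor>x\<rfloor> - 1) * (deriv^^Suc n) S (x - of_int (\<lfloor>x\<rfloor> - 1))
       + a \<lfloor>x\<rfloor> * (deriv^^Suc n) S (x - of_int \<lfloor>x\<rfloor>)" for n x
  proof -
    define k where "k = \<lfloor>x\<rfloor>"
    have "(deriv^^n) g x = (deriv^^Suc n) (hh k) x"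
      unfolding gG k_def by (rule loc_eq[OF opn loc mem])
    also have "\<dots> = a (k - 1) * (deriv^^Suc n) S (x - of_int (k - 1)) + a k * (deriv^^Suc n) S (x - of_int k)"
    proof -
      have s1: "sm (\<lambda>y. a (k - 1) * S (y - of_int (k - 1)))" "sm (\<lambda>y. a k * S (y - of_int k))"
        by (intro sm.intros sm_shift sm_S)+
      have s2: "sm (\<lambda>y. a (k - 1) * S (y - of_int (k - 1)) + a k * S (y - of_int k))"
        by (intro sm.intros sm_shift sm_S)
      show ?thesis
        unfolding hh_def
        by (simp only: iter_add[OF smC s2] iter_add[OF s1] iter_const
            iter_cmult[OF sm_shift[OF sm_S]] iter_shift[OF sm_S])
    qed
    finally show ?thesis unfolding k_def .
  qed
  have Linf: "Linfty_real ((deriv ^^ n) g)" for n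
  proof -
    obtain B where B: "\<forall>t. \<bar>(deriv^^Suc n) S t\<bar> \<le> B" using S_iter_bound by blast
    have bnd: "\<bar>(deriv^^n) g x\<bar> \<le> 2 * M * B" for x
    proof -
      have "\<bar>(deriv^^n) g x\<bar> \<le> \<bar>a (\<lfloor>x\<rfloor> - 1)\<bar> * \<bar>(deriv^^Suc n) S (x - of_int (\<lfloor>x\<rfloor> - 1))\<bar>
           + \<bar>a \<lfloor>x\<rfloor>\<bar> * \<bar>(deriv^^Suc n) S (x - of_int \<lfloor>x\<rfloor>)\<bar>"
        unfolding gn_formula by (simp add: abs_mult abs_triangle_ineq[THEN order_trans])
      also have "\<dots> \<le> M * B + M * B"
        using B a_bound M0 by (intro add_mono mult_mono) auto
      finally show ?thesis by (simp add: mult.commute mult.left_commute)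
    qed
    have cont: "continuous_on UNIV ((deriv^^n) g)"
      unfolding gG
      using loc_diff[OF opn loc mem sm_hh] differentiable_imp_continuous_within
      by (metis continuous_at_imp_continuous_on)
    have "(deriv^^n) g \<in> borel_measurable lebesgue"
      using borel_measurable_continuous_onI[OF cont] by (simp add: measurable_completion)
    then show ?thesis unfolding Linfty_real_def using bnd by (auto intro!: exI[of _ "2*M*B"])
  qed
  have Gdiff: "(G has_real_derivative g y) (at y)" for y
    using loc_diff[OF opn loc mem sm_hh, of 0 y] unfolding g_def
    by (simp add: DERIV_deriv_iff_real_differentiable)
  have integ: "integral {0..x} g = G x" if "x \<ge> 0" for x
  proof -
    have "(g has_integral (G x - G 0)) {0..x}"
      using that Gdiff
      by (intro fundamental_theorem_of_calculus)
         (auto simp: has_real_derivative_iff_has_vector_derivative[symmetric] intro: has_field_derivative_at_within)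
    moreover have "G 0 = 0" using G0 by simp
    ultimately show ?thesis by (simp add: integral_unique)
  qed
  obtain B0 where B0: "\<forall>t. \<bar>(deriv^^0) S t\<bar> \<le> B0" using S_iter_bound by blast
  have final: "\<bar>\<tau> x - integral {0..x} g\<bar> \<le> M + \<bar>\<tau> (of_int K)\<bar> + M * B0" if x: "x \<ge> of_int K" for x
  proof -
    define k where "k = \<lfloor>x\<rfloor>"
    have kK: "k \<ge> K" unfolding k_def using x by (simp add: le_floor_iff)
    have kx: "of_int k \<le> x" "x < of_int k + 1" unfolding k_def by linarith+
    have "of_int k \<ge> x1" using kK Kx1 by (smt (verit) of_int_le_iff)
    then have "\<bar>\<tau> (of_int k + (x - of_int k)) - \<tau> (of_int k)\<bar> \<le> M"
      using M[rule_format, of "of_int k" "x - of_int k"] kx \<open>of_int k \<ge> x1\<close> by simp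
    then have t1: "\<bar>\<tau> x - \<tau> (of_int k)\<bar> \<le> M" by simp
    have "integral {0..x} g = G x" using x K1 by (intro integ) linarith
    also have "G x = \<tau> (of_int k) - \<tau> (of_int K) + a k * S (x - of_int k)"
      unfolding G_def k_def[symmetric] T_def using kK by simp
    finally have "\<bar>\<tau> x - integral {0..x} g\<bar> \<le> \<bar>\<tau> x - \<tau> (of_int k)\<bar> + \<bar>\<tau> (of_int K)\<bar> + \<bar>a k\<bar> * \<bar>S (x - of_int k)\<bar>"
      using abs_mult[of "a k" "S (x - of_int k)"] by (smt (verit))
    also have "\<dots> \<le> M + \<bar>\<tau> (of_int K)\<bar> + M * B0"
      using t1 a_bound[of k] B0 M0 by (intro add_mono mult_mono) auto
    finally show ?thesis .
  qed
  show ?thesis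
    using smooth gzero Linf final by blast
qed

end
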